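(* Let $f:\mathbb{R}^n_{>0}\to\mathbb{R}^n_{>0}$ be order-preserving, homogeneous, real analytic, and multiplicatively convex. Then $\mathcal{G}(f)=\mathcal{G}(f'(x))$ for every $x\in\mathbb{R}^n_{>0}$.
   Context: Entrywise order. Order-preserving: $x\le y\Rightarrow f(x)\le f(y)$; homogeneous: $f(tx)=tf(x)$ for $t>0$; real analytic: each entry real analytic on $\mathbb{R}^n_{>0}$; multiplicatively convex: each entry of $\log\circ f\circ\exp$ is convex. $\mathcal{G}(f)$ is the directed graph on $[n]=\{1,\dots,n\}$ with an arc $i\to j$ when $\lim_{t\to\infty}f(\exp(te_{\{j\}}))_i=\infty$ ($e_{\{j\}}$ the $j$-th standard basis vector). For a nonnegative matrix $A=[a_{ij}]$ (here the Jacobian $f'(x)$), $\mathcal{G}(A)$ is the directed graph on $[n]$ with an arc $i\to j$ when $a_{ij}\ne0$. *)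

theory Defs
  imports "HOL-Analysis.Analysis"
begin

definition pos_orthant :: "(real ^ 'n) set" where
  "pos_orthant = {x. \<forall>i. 0 < x $ i}"

text \<open>Real analyticity of a scalar function on a set S of real^'n: near every
  point of S the function is the (absolutely, i.e. unconditionally, convergent)
  sum of a multivariate power series indexed by multi-indices.\<close>
definition real_analytic_on :: "(real ^ 'n \<Rightarrow> real) \<Rightarrow> (real ^ 'n) set \<Rightarrow> bool" where
  "real_analytic_on g S \<longleftrightarrow>
     (\<forall>x\<in>S. \<exists>r>0. \<exists>c :: ('n \<Rightarrow> nat) \<Rightarrow> real.
        \<forall>y\<in>ball x r.
          ((\<lambda>\<alpha>. c \<alpha> * (\<Prod>k\<in>UNIV. (y $ k - x $ k) ^ \<alpha> k)) has_sum g y) UNIV)"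

definition order_preserving_pos :: "(real ^ 'n \<Rightarrow> real ^ 'n) \<Rightarrow> bool" where
  "order_preserving_pos f \<longleftrightarrow>
     (\<forall>x\<in>pos_orthant. \<forall>y\<in>pos_orthant. x \<le> y \<longrightarrow> f x \<le> f y)"

definition homogeneous_pos :: "(real ^ 'n \<Rightarrow> real ^ 'n) \<Rightarrow> bool" where
  "homogeneous_pos f \<longleftrightarrow>
     (\<forall>x\<in>pos_orthant. \<forall>t::real. t > 0 \<longrightarrow> f (t *\<^sub>R x) = t *\<^sub>R f x)"

definition vexp :: "real ^ 'n \<Rightarrow> real ^ 'n" where
  "vexp y = (\<chi> k. exp (y $ k))"

definition mult_convex :: "(real ^ 'n \<Rightarrow> real ^ 'n) \<Rightarrow> bool" where
  "mult_convex f \<longleftrightarrow> (\<forall>i. convex_on UNIV (\<lambda>y. ln (f (vexp y) $ i)))"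

text \<open>Arc i -> j of G(f): lim_{t\<rightarrow>\<infinity>} f(exp(t e_j))_i = \<infinity>.\<close>
definition graph_f :: "(real ^ 'n \<Rightarrow> real ^ 'n) \<Rightarrow> 'n \<Rightarrow> 'n \<Rightarrow> bool" where
  "graph_f f i j \<longleftrightarrow>
     filterlim (\<lambda>t::real. f (vexp (t *\<^sub>R axis j 1)) $ i) at_top at_top"

text \<open>Jacobian matrix f'(x): entry (i,j) is the partial derivative of f_i in x_j.\<close>
definition jacobian :: "(real ^ 'n \<Rightarrow> real ^ 'n) \<Rightarrow> real ^ 'n \<Rightarrow> real ^ 'n ^ 'n" where
  "jacobian f x = matrix (frechet_derivative f (at x))"

text \<open>Arc i -> j of G(A): A_ij \<noteq> 0.\<close>
definition graph_mat :: "real ^ 'n ^ 'n \<Rightarrow> 'n \<Rightarrow> 'n \<Rightarrow> bool" where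
  "graph_mat A i j \<longleftrightarrow> A $ i $ j \<noteq> 0"

end

theory Submission imports Defs "HOL-Complex_Analysis.Cauchy_Integral_Formula" begin


definition mi1 :: "'n \<Rightarrow> 'n \<Rightarrow> nat" where "mi1 k = (\<lambda>l. if l = k then 1 else 0)"

lemma mi_small:
  fixes \<alpha> :: "'n::finite \<Rightarrow> nat"
  assumes "\<alpha> \<notin> insert (\<lambda>_. 0) (range mi1)"
  shows "2 \<le> (\<Sum>k\<in>UNIV. \<alpha> k)"
proof (rule ccontr)
  assume "\<not> ?thesis"
  hence le: "(\<Sum>k\<in>UNIV. \<alpha> k) \<le> 1" by simp
  from assms have "\<alpha> \<noteq> (\<lambda>_. 0)" by auto
  then obtain k where k: "\<alpha> k \<noteq> 0" by auto
  have split: "(\<Sum>k\<in>UNIV. \<alpha> k) = \<alpha> k + (\<Sum>l\<in>UNIV-{k}. \<alpha> l)"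
    by (simp add: sum.remove)
  have s1: "\<alpha> k + (\<Sum>l\<in>UNIV-{k}. \<alpha> l) \<le> 1" using le split by simp
  hence "\<alpha> k = 1" and "(\<Sum>l\<in>UNIV-{k}. \<alpha> l) = 0" using k by arith+
  hence "\<forall>l\<in>UNIV-{k}. \<alpha> l = 0" by simp
  with \<open>\<alpha> k = 1\<close> have "\<alpha> = mi1 k" by (auto simp: mi1_def fun_eq_iff)
  with assms show False by auto
qed

lemma prod_mi1: "(\<Prod>l\<in>UNIV. (h::real^'n::finite) $ l ^ mi1 k l) = h $ k"
proof -
  have "(\<Prod>l\<in>UNIV. h $ l ^ mi1 k l) = (\<Prod>l\<in>UNIV. if l = k then h $ l else 1)"
    by (rule prod.cong) (auto simp: mi1_def)
  also have "\<dots> = h $ k" by (simp add: prod.delta)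
  finally show ?thesis .
qed

lemma prod_zero_pow: "(\<Prod>l\<in>UNIV. (0::real) ^ (\<alpha>::'n::finite\<Rightarrow>nat) l) = (if \<alpha> = (\<lambda>_. 0) then 1 else 0)"
proof (cases "\<alpha> = (\<lambda>_. 0)")
  case False
  then obtain k where "\<alpha> k \<noteq> 0" by auto
  hence "(0::real) ^ \<alpha> k = 0" by simp
  hence "(\<Prod>l\<in>UNIV. (0::real) ^ \<alpha> l) = 0" by (intro prod_zero) auto
  with False show ?thesis by simp
qed simp

lemma ps_has_derivative:
  fixes F :: "real^'n \<Rightarrow> real" and c :: "('n \<Rightarrow> nat) \<Rightarrow> real"
  assumes r: "r > 0"
    and hs: "\<forall>y\<in>ball x r. ((\<lambda>\<alpha>. c \<alpha> * (\<Prod>k\<in>UNIV. (y$k - x$k) ^ \<alpha> k)) has_sum F y) UNIV"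
  shows "(F has_derivative (\<lambda>h. (\<chi> k. c (mi1 k)) \<bullet> h)) (at x)"
proof -
  define \<rho> where "\<rho> = r / (2 * real CARD('n))"
  have \<rho>: "\<rho> > 0" using r by (simp add: \<rho>_def)
  have cn: "real CARD('n) \<ge> 1" using zero_less_card_finite[where 'a='n] by linarith
  have "\<rho> \<le> r / 2" unfolding \<rho>_def using r cn by (intro divide_left_mono) auto
  hence \<rho>r: "\<rho> < r" using r by linarith
  define p where "p = (\<chi> k. x$k + \<rho>)"
  have "norm (x - p) \<le> (\<Sum>k\<in>UNIV. \<bar>(x - p)$k\<bar>)" by (rule norm_le_l1_cart)
  also have "\<dots> = real CARD('n) * \<rho>" using \<rho> by (simp add: p_def)
  also have "\<dots> = r/2" unfolding \<rho>_def by simp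
  finally have "p \<in> ball x r" using r by (simp add: dist_norm)
  with hs have hp0: "((\<lambda>\<alpha>. c \<alpha> * (\<Prod>k\<in>UNIV. (p$k - x$k) ^ \<alpha> k)) has_sum F p) UNIV" by blast
  define N where "N \<alpha> = (\<Sum>k\<in>UNIV. \<alpha> k)" for \<alpha> :: "'n \<Rightarrow> nat"
  have eqp: "(\<lambda>\<alpha>. c \<alpha> * (\<Prod>k\<in>UNIV. (p$k - x$k) ^ \<alpha> k)) = (\<lambda>\<alpha>. c \<alpha> * \<rho> ^ N \<alpha>)"
  proof
    fix \<alpha> :: "'n \<Rightarrow> nat"
    have pk: "p$k - x$k = \<rho>" for k by (simp add: p_def)
    show "c \<alpha> * (\<Prod>k\<in>UNIV. (p$k - x$k) ^ \<alpha> k) = c \<alpha> * \<rho> ^ N \<alpha>"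
      unfolding pk N_def power_sum ..
  qed
  have "((\<lambda>\<alpha>. c \<alpha> * \<rho> ^ N \<alpha>) has_sum F p) UNIV" using hp0 unfolding eqp .
  hence sm: "(\<lambda>\<alpha>. c \<alpha> * \<rho> ^ N \<alpha>) summable_on UNIV" unfolding summable_on_def by (rule exI)
  have sm2: "(\<lambda>\<alpha>. norm (c \<alpha> * \<rho> ^ N \<alpha>)) summable_on UNIV"
    by (rule summable_on_iff_abs_summable_on_real[THEN iffD1, OF sm])
  have eqn: "(\<lambda>\<alpha>. norm (c \<alpha> * \<rho> ^ N \<alpha>)) = (\<lambda>\<alpha>. \<bar>c \<alpha>\<bar> * \<rho> ^ N \<alpha>)"
    using \<rho> by (simp add: abs_mult)
  have "(\<lambda>\<alpha>. \<bar>c \<alpha>\<bar> * \<rho> ^ N \<alpha>) summable_on UNIV"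
    using sm2 unfolding eqn .
  then obtain B where hB: "((\<lambda>\<alpha>. \<bar>c \<alpha>\<bar> * \<rho> ^ N \<alpha>) has_sum B) UNIV"
    using summable_on_def by blast
  have B0: "B \<ge> 0" by (rule has_sum_nonneg[OF hB]) (use \<rho> in auto)
  define w where "w = (\<chi> k. c (mi1 k))"
  define Bs where "Bs = insert (\<lambda>_. 0::nat) (range (mi1 :: 'n \<Rightarrow> _))"
  have finB: "finite Bs" by (simp add: Bs_def)
  have Fx: "F x = c (\<lambda>_. 0)"
  proof -
    have "((\<lambda>\<alpha>. c \<alpha> * (\<Prod>k\<in>UNIV. (x$k - x$k) ^ \<alpha> k)) has_sum F x) UNIV"
      using hs r by (metis centre_in_ball)
    moreover have "((\<lambda>\<alpha>. c \<alpha> * (\<Prod>k\<in>UNIV. (x$k - x$k) ^ \<alpha> k)) has_sum c (\<lambda>_. 0)) UNIV"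
      by (rule has_sum_finite_neutralI[where B="{\<lambda>_. 0}"]) (auto simp: prod_zero_pow)
    ultimately show ?thesis using has_sum_unique by blast
  qed
  have est: "\<bar>F (x + h) - F x - w \<bullet> h\<bar> \<le> B / \<rho>^2 * norm h ^ 2" if hn: "norm h < \<rho>" for h
  proof -
    define t where "t = norm h / \<rho>"
    have t: "0 \<le> t" "t \<le> 1" using hn \<rho> by (auto simp: t_def)
    define tm where "tm \<alpha> = c \<alpha> * (\<Prod>k\<in>UNIV. h$k ^ \<alpha> k)" for \<alpha>
    have "x + h \<in> ball x r" using hn \<rho>r by (simp add: dist_norm)
    with hs have "((\<lambda>\<alpha>. c \<alpha> * (\<Prod>k\<in>UNIV. ((x + h)$k - x$k) ^ \<alpha> k)) has_sum F (x + h)) UNIV"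
      by blast
    moreover have "(\<lambda>\<alpha>. c \<alpha> * (\<Prod>k\<in>UNIV. ((x + h)$k - x$k) ^ \<alpha> k)) = tm"
      by (simp add: tm_def fun_eq_iff)
    ultimately have hy: "(tm has_sum F (x + h)) UNIV" by simp
    have low: "((\<lambda>\<alpha>. if \<alpha> \<in> Bs then tm \<alpha> else 0) has_sum (F x + w \<bullet> h)) UNIV"
    proof (rule has_sum_finite_neutralI[where B=Bs])
      have "inj (mi1 :: 'n \<Rightarrow> _)" unfolding inj_def mi1_def fun_eq_iff by (metis one_neq_zero)
      moreover have "(\<lambda>_. 0::nat) \<noteq> mi1 k" for k :: 'n
        unfolding mi1_def fun_eq_iff by (metis one_neq_zero)
      hence "(\<lambda>_. 0::nat) \<notin> range (mi1 :: 'n \<Rightarrow> _)" by auto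
      ultimately have "(\<Sum>\<alpha>\<in>Bs. tm \<alpha>) = tm (\<lambda>_. 0) + (\<Sum>k\<in>UNIV. tm (mi1 k))"
        by (simp add: Bs_def sum.reindex)
      also have "\<dots> = F x + w \<bullet> h"
        by (simp add: tm_def prod_mi1 Fx w_def inner_vec_def)
      finally show "F x + w \<bullet> h = (\<Sum>\<alpha>\<in>Bs. if \<alpha> \<in> Bs then tm \<alpha> else 0)" by simp
    qed (auto simp: finB)
    have rem: "((\<lambda>\<alpha>. if \<alpha> \<in> Bs then 0 else tm \<alpha>) has_sum (F (x + h) - F x - w \<bullet> h)) UNIV"
    proof -
      have "((\<lambda>\<alpha>. tm \<alpha> + - (if \<alpha> \<in> Bs then tm \<alpha> else 0)) has_sum (F (x + h) + - (F x + w \<bullet> h))) UNIV"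
        by (intro has_sum_add hy has_sum_uminusI low)
      moreover have "(\<lambda>\<alpha>. tm \<alpha> + - (if \<alpha> \<in> Bs then tm \<alpha> else 0)) = (\<lambda>\<alpha>. if \<alpha> \<in> Bs then 0 else tm \<alpha>)"
        by auto
      ultimately show ?thesis by (simp add: algebra_simps)
    qed
    have pt: "\<bar>if \<alpha> \<in> Bs then 0 else tm \<alpha>\<bar> \<le> t^2 * (\<bar>c \<alpha>\<bar> * \<rho> ^ N \<alpha>)" for \<alpha>
    proof (cases "\<alpha> \<in> Bs")
      case False
      hence N2: "2 \<le> N \<alpha>" using mi_small by (simp add: Bs_def N_def)
      have "\<bar>\<Prod>k\<in>UNIV. h$k ^ \<alpha> k\<bar> = (\<Prod>k\<in>UNIV. \<bar>h$k\<bar> ^ \<alpha> k)" by (simp add: abs_prod power_abs)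
      also have "\<dots> \<le> (\<Prod>k\<in>UNIV. norm h ^ \<alpha> k)"
        by (intro prod_mono conjI power_mono component_le_norm_cart) auto
      also have "\<dots> = norm h ^ N \<alpha>" by (simp add: N_def power_sum)
      also have "\<dots> = t ^ N \<alpha> * \<rho> ^ N \<alpha>" using \<rho> by (simp add: t_def power_divide)
      also have "\<dots> \<le> t^2 * \<rho> ^ N \<alpha>"
        using t N2 \<rho> by (intro mult_right_mono power_decreasing) auto
      finally have "\<bar>\<Prod>k\<in>UNIV. h$k ^ \<alpha> k\<bar> \<le> t^2 * \<rho> ^ N \<alpha>" .
      hence "\<bar>c \<alpha>\<bar> * \<bar>\<Prod>k\<in>UNIV. h$k ^ \<alpha> k\<bar> \<le> \<bar>c \<alpha>\<bar> * (t^2 * \<rho> ^ N \<alpha>)"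
        by (intro mult_left_mono) auto
      with False show ?thesis by (simp add: tm_def abs_mult mult_ac)
    qed (use \<rho> in simp)
    have hB2: "((\<lambda>\<alpha>. t^2 * (\<bar>c \<alpha>\<bar> * \<rho> ^ N \<alpha>)) has_sum t^2 * B) UNIV"
      by (rule has_sum_cmult_right[OF hB])
    have up: "F (x + h) - F x - w \<bullet> h \<le> t^2 * B"
      by (rule has_sum_mono[OF rem hB2]) (rule abs_le_D1[OF pt])
    have lo: "- (t^2 * B) \<le> F (x + h) - F x - w \<bullet> h"
      by (rule has_sum_mono[OF has_sum_uminusI[OF hB2] rem]) (metis abs_le_D2 pt minus_le_iff)
    have "t^2 * B = B / \<rho>^2 * norm h ^ 2" using \<rho> by (simp add: t_def power_divide)
    with up lo show ?thesis by auto
  qed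
  show ?thesis
    unfolding has_derivative_within_alt
  proof (intro conjI allI impI)
    show "bounded_linear (\<lambda>h. (\<chi> k. c (mi1 k)) \<bullet> h)" by (rule bounded_linear_inner_right)
    fix e :: real assume e: "e > 0"
    define d where "d = min \<rho> (e * \<rho>^2 / (B + 1))"
    have d: "d > 0" using e \<rho> B0 by (simp add: d_def)
    show "\<exists>d>0. \<forall>y\<in>UNIV. norm (y - x) < d \<longrightarrow>
        norm (F y - F x - (\<chi> k. c (mi1 k)) \<bullet> (y - x)) \<le> e * norm (y - x)"
    proof (intro exI[of _ d] conjI ballI impI d)
      fix y assume y: "norm (y - x) < d"
      define h where "h = y - x"
      have hn: "norm h < \<rho>" "norm h < e * \<rho>^2 / (B + 1)" using y by (auto simp: d_def h_def)
      have "\<bar>F (x + h) - F x - w \<bullet> h\<bar> \<le> B / \<rho>^2 * norm h ^ 2" by (rule est[OF hn(1)])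
      also have "\<dots> = (B / \<rho>^2 * norm h) * norm h" by (simp add: power2_eq_square)
      also have "\<dots> \<le> e * norm h"
      proof (intro mult_right_mono)
        have "B / \<rho>^2 * norm h \<le> B / \<rho>^2 * (e * \<rho>^2 / (B + 1))"
          using hn(2) B0 \<rho> by (intro mult_left_mono) auto
        also have "\<dots> = e * (B / (B + 1))" using \<rho> by (simp add: field_simps)
        also have "\<dots> \<le> e" using B0 e by (simp add: field_simps)
        finally show "B / \<rho>^2 * norm h \<le> e" .
      qed auto
      finally show "norm (F y - F x - (\<chi> k. c (mi1 k)) \<bullet> (y - x)) \<le> e * norm (y - x)"
        by (simp add: h_def w_def)
    qed
  qed
qed



lemma convex_line:
  fixes G :: "'a::real_vector \<Rightarrow> real"
  assumes "convex_on UNIV G"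
  shows "convex_on UNIV (\<lambda>s::real. G (y + s *\<^sub>R e))"
proof (rule convex_onI)
  fix t a b :: real assume t: "t > 0" "t < 1"
  have eq: "y + ((1 - t) *\<^sub>R a + t *\<^sub>R b) *\<^sub>R e = (1 - t) *\<^sub>R (y + a *\<^sub>R e) + t *\<^sub>R (y + b *\<^sub>R e)"
    by (simp add: algebra_simps)
  show "G (y + ((1 - t) *\<^sub>R a + t *\<^sub>R b) *\<^sub>R e) \<le> (1 - t) * G (y + a *\<^sub>R e) + t * G (y + b *\<^sub>R e)"
    unfolding eq using convex_onD[OF assms] t by simp
qed simp

definition emb :: "'n \<Rightarrow> nat \<Rightarrow> 'n \<Rightarrow> nat" where "emb j m = (\<lambda>k. if k = j then m else 0)"

lemma line_series:
  fixes F :: "real^'n \<Rightarrow> real" and c :: "('n \<Rightarrow> nat) \<Rightarrow> real"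
  assumes hs: "\<forall>y\<in>ball x r. ((\<lambda>\<alpha>. c \<alpha> * (\<Prod>k\<in>UNIV. (y$k - x$k) ^ \<alpha> k)) has_sum F y) UNIV"
    and s: "\<bar>s\<bar> < r"
  shows "(\<lambda>m. c (emb j m) * s^m) sums F (x + s *\<^sub>R axis j 1)"
proof -
  let ?y = "x + s *\<^sub>R axis j 1"
  have "norm (s *\<^sub>R axis j (1::real)) = \<bar>s\<bar>" by simp
  hence "?y \<in> ball x r" using s by (simp add: dist_norm)
  with hs have h: "((\<lambda>\<alpha>. c \<alpha> * (\<Prod>k\<in>UNIV. (?y$k - x$k) ^ \<alpha> k)) has_sum F ?y) UNIV" by blast
  define T where "T \<alpha> = c \<alpha> * (\<Prod>k\<in>UNIV. (?y$k - x$k) ^ \<alpha> k)" for \<alpha>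
  have yk: "?y$k - x$k = (if k = j then s else 0)" for k by (simp add: axis_def)
  have T0: "T \<alpha> = 0" if "\<alpha> \<notin> range (emb j)" for \<alpha>
  proof -
    have "\<exists>k. k \<noteq> j \<and> \<alpha> k \<noteq> 0"
    proof (rule ccontr)
      assume "\<not> ?thesis"
      hence "\<alpha> = emb j (\<alpha> j)" by (auto simp: emb_def fun_eq_iff)
      with that show False by auto
    qed
    then obtain k where k: "k \<noteq> j" "\<alpha> k \<noteq> 0" by auto
    hence "(?y$k - x$k) ^ \<alpha> k = 0" using yk by simp
    hence "(\<Prod>k\<in>UNIV. (?y$k - x$k) ^ \<alpha> k) = 0" by (intro prod_zero) auto
    thus ?thesis by (simp add: T_def)
  qed
  have Temb: "T (emb j m) = c (emb j m) * s^m" for m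
  proof -
    have "(\<Prod>k\<in>UNIV. (?y$k - x$k) ^ emb j m k) = (\<Prod>k\<in>UNIV. if k = j then s^m else 1)"
      by (rule prod.cong) (auto simp: yk emb_def)
    also have "\<dots> = s^m" by simp
    finally show ?thesis by (simp add: T_def)
  qed
  have "(T has_sum F ?y) UNIV" using h by (simp add: T_def[abs_def])
  hence "(T has_sum F ?y) (range (emb j))"
    by (subst has_sum_cong_neutral[where T=UNIV]) (auto simp: T0)
  moreover have "inj (emb j)" by (auto simp: inj_def emb_def fun_eq_iff)
  ultimately have "((T \<circ> emb j) has_sum F ?y) UNIV" by (simp add: has_sum_reindex)
  hence "((\<lambda>m. c (emb j m) * s^m) has_sum F ?y) UNIV" by (simp add: o_def Temb)
  thus ?thesis by (rule has_sum_imp_sums)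
qed

lemma deriv_line:
  fixes F :: "real^'n \<Rightarrow> real"
  assumes "(F has_derivative (\<lambda>h. w \<bullet> h)) (at (x + (u - x$j) *\<^sub>R axis j 1))"
  shows "((\<lambda>u. F (x + (u - x$j) *\<^sub>R axis j 1)) has_real_derivative (w $ j)) (at u)"
proof -
  have g: "((\<lambda>u. x + (u - x$j) *\<^sub>R axis j 1) has_derivative (\<lambda>h. h *\<^sub>R axis j 1)) (at u)"
    by (auto intro!: derivative_eq_intros)
  have "((\<lambda>u. F (x + (u - x$j) *\<^sub>R axis j 1)) has_derivative (\<lambda>h. w \<bullet> (h *\<^sub>R axis j 1))) (at u)"
    by (rule has_derivative_compose[OF g assms])
  moreover have "(\<lambda>h. w \<bullet> (h *\<^sub>R axis j (1::real))) = (*) (w $ j)"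
    by (auto simp: fun_eq_iff inner_axis)
  ultimately show ?thesis by (simp add: has_field_derivative_def)
qed



lemma analytic_const_extend:
  fixes \<phi> :: "real \<Rightarrow> real"
  assumes a: "a > 0"
    and ps: "\<And>u. u > 0 \<Longrightarrow> \<exists>r>0. \<exists>c::nat\<Rightarrow>real. \<forall>s. \<bar>s\<bar> < r \<longrightarrow> (\<lambda>m. c m * s^m) sums \<phi> (u+s)"
    and ct: "\<And>u. u > 0 \<Longrightarrow> isCont \<phi> u"
    and mono: "\<And>u v. 0 < u \<Longrightarrow> u \<le> v \<Longrightarrow> \<phi> u \<le> \<phi> v"
    and cst: "\<And>u. 0 < u \<Longrightarrow> u \<le> a \<Longrightarrow> \<phi> u = K"
  shows "\<forall>u>0. \<phi> u = K"
proof (rule ccontr)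
  assume "\<not> ?thesis"
  then obtain u0 where u0: "u0 > 0" "\<phi> u0 \<noteq> K" by auto
  define A where "A = {u. 0 < u \<and> \<phi> u = K}"
  have down: "v \<in> A" if "u \<in> A" "0 < v" "v \<le> u" for u v
  proof (cases "v \<le> a")
    case True thus ?thesis using cst that by (auto simp: A_def)
  next
    case False
    hence "\<phi> a \<le> \<phi> v" using mono a by auto
    moreover have "\<phi> v \<le> \<phi> u" using mono that by auto
    ultimately show ?thesis using that cst[of a] a by (auto simp: A_def)
  qed
  have aA: "a \<in> A" using cst a by (auto simp: A_def)
  have bd: "v < u0" if "v \<in> A" for v
  proof (rule ccontr)
    assume "\<not> v < u0"
    hence "u0 \<in> A" using down[OF that u0(1)] by auto
    with u0 show False by (auto simp: A_def)
  qed
  have bdd: "bdd_above A" using bd by (meson bdd_aboveI less_imp_le)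
  define S where "S = Sup A"
  have aS: "a \<le> S" unfolding S_def using aA bdd by (rule cSup_upper)
  have S0: "S > 0" using a aS by linarith
  have below: "v \<in> A" if "0 < v" "v < S" for v
  proof -
    from that have "\<exists>x\<in>A. v < x" unfolding S_def using aA bdd
      by (subst less_cSup_iff[symmetric]) auto
    then obtain x where "x \<in> A" "v < x" by auto
    thus ?thesis using down that by auto
  qed
  have phiS: "\<phi> S = K"
  proof -
    have "(\<phi> \<longlongrightarrow> \<phi> S) (at_left S)"
      using ct[OF S0] by (simp add: isCont_def tendsto_within_subset filterlim_at_split)
    moreover have "eventually (\<lambda>v. \<phi> v = K) (at_left S)"
      using eventually_at_left_real[OF S0] by eventually_elim (use below in \<open>auto simp: A_def\<close>)
    ultimately have "((\<lambda>_. K) \<longlongrightarrow> \<phi> S) (at_left S)"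
      by (rule Lim_transform_eventually)
    thus ?thesis using tendsto_const tendsto_unique trivial_limit_at_left_real by metis
  qed
  obtain r c where r: "r > 0" and sm: "\<And>s. \<bar>s\<bar> < r \<Longrightarrow> (\<lambda>m. c m * s^m) sums \<phi> (S+s)"
    using ps[OF S0] by blast
  show False
  proof (cases "\<exists>m>0. c m \<noteq> 0")
    case True
    then obtain m where m: "m > 0" "c m \<noteq> 0" by auto
    define a' where "a' n = (if n = 0 then c 0 - K else c n)" for n
    obtain s where s: "0 < s" and nz: "\<And>z. z \<in> cball S s - {S} \<Longrightarrow> \<phi> z - K \<noteq> 0"
    proof (rule powser_0_nonzero[where r=r and a=a' and \<xi>=S and f="\<lambda>z. \<phi> z - K" and m=m])
      show "0 < r" by (rule r)
      show "\<phi> S - K = 0" using phiS by simp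
      show "a' m \<noteq> 0" using m by (simp add: a'_def)
      show "0 < m" by (rule m)
      fix z :: real assume "norm (z - S) < r"
      hence s1: "(\<lambda>n. c n * (z - S)^n) sums \<phi> z" using sm[of "z - S"] by simp
      have s2: "(\<lambda>n. if n = 0 then K else 0) sums K" using sums_single[of 0 "\<lambda>_. K"] by simp
      have "(\<lambda>n. c n * (z - S)^n - (if n = 0 then K else 0)) sums (\<phi> z - K)"
        by (rule sums_diff[OF s1 s2])
      moreover have "(\<lambda>n. c n * (z - S)^n - (if n = 0 then K else 0)) = (\<lambda>n. a' n * (z - S)^n)"
        by (auto simp: a'_def fun_eq_iff algebra_simps)
      ultimately show "(\<lambda>n. a' n * (z - S)^n) sums (\<phi> z - K)" by simp
    qed blast
    define z where "z = S - min s S / 2"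
    have "z \<in> cball S s - {S}" using s S0 by (auto simp: z_def dist_real_def)
    moreover have "z \<in> A" using s S0 by (intro below) (auto simp: z_def)
    ultimately show False using nz by (auto simp: A_def)
  next
    case False
    have val: "\<phi> (S + s) = c 0" if "\<bar>s\<bar> < r" for s
    proof -
      have "(\<lambda>m. c m * s^m) = (\<lambda>m. if m = 0 then c 0 else 0)"
      proof
        fix m :: nat
        show "c m * s^m = (if m = 0 then c 0 else 0)"
        proof (cases "m = 0")
          case False
          hence "c m = 0" using \<open>\<not> (\<exists>m>0. c m \<noteq> 0)\<close> by blast
          thus ?thesis using False by simp
        qed simp
      qed
      hence "(\<lambda>m. c m * s^m) sums c 0" using sums_single[of 0 "\<lambda>_. c 0"] by simp
      thus ?thesis using sm[OF that] sums_unique2 by blast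
    qed
    have "c 0 = K" using val[of 0] r phiS by simp
    hence "S + r/2 \<in> A" using val[of "r/2"] r S0 by (auto simp: A_def)
    hence "S + r/2 \<le> S" unfolding S_def using bdd by (rule cSup_upper)
    thus False using r by simp
  qed
qed

theorem lemma4p9:
  fixes f :: "real ^ 'n \<Rightarrow> real ^ 'n"
  assumes maps: "\<forall>x\<in>pos_orthant. f x \<in> pos_orthant"
    and op: "order_preserving_pos f"
    and hom: "homogeneous_pos f"
    and an: "\<forall>i. real_analytic_on (\<lambda>x. f x $ i) pos_orthant"
    and mc: "mult_convex f"
  shows "\<forall>x\<in>pos_orthant. graph_f f = graph_mat (jacobian f x)"
proof
  fix x :: "real^'n" assume x: "x \<in> pos_orthant"
  have xpos: "\<And>k. 0 < x$k" using x by (simp add: pos_orthant_def)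
  have opD: "f u \<le> f v" if "u \<in> pos_orthant" "v \<in> pos_orthant" "u \<le> v" for u v
    using op that unfolding order_preserving_pos_def by blast
  have homD: "f (t *\<^sub>R u) = t *\<^sub>R f u" if "u \<in> pos_orthant" "t > 0" for u t
    using hom that unfolding homogeneous_pos_def by blast
  have anD: "\<exists>r>0. \<exists>c. \<forall>y\<in>ball z r. ((\<lambda>\<alpha>. c \<alpha> * (\<Prod>k\<in>UNIV. (y$k - z$k) ^ \<alpha> k)) has_sum f y $ i) UNIV"
    if "z \<in> pos_orthant" for z i
    using an that unfolding real_analytic_on_def by blast
  have compder: "\<exists>w. ((\<lambda>y. f y $ i) has_derivative (\<lambda>h. w \<bullet> h)) (at z)" if "z \<in> pos_orthant" for i z
  proof -
    from anD[OF that, of i] obtain r c where r: "r > 0"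
      and hs: "\<forall>y\<in>ball z r. ((\<lambda>\<alpha>. c \<alpha> * (\<Prod>k\<in>UNIV. (y$k - z$k) ^ \<alpha> k)) has_sum f y $ i) UNIV"
      by blast
    show ?thesis using ps_has_derivative[OF r hs] by blast
  qed
  obtain W where W: "\<And>i. ((\<lambda>y. f y $ i) has_derivative (\<lambda>h. W i \<bullet> h)) (at x)"
    using compder[OF x] by metis
  have fder: "(f has_derivative (\<lambda>h. \<chi> i. W i \<bullet> h)) (at x)"
  proof (subst has_derivative_componentwise_within, intro ballI)
    fix b :: "real^'n" assume "b \<in> Basis"
    then obtain i where b: "b = axis i 1" by (auto simp: Basis_vec_def)
    show "((\<lambda>y. f y \<bullet> b) has_derivative (\<lambda>h. (\<chi> i. W i \<bullet> h) \<bullet> b)) (at x)"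
      using W[of i] by (simp add: b inner_axis)
  qed
  have jac: "jacobian f x $ i $ j = W i $ j" for i j
    using frechet_derivative_at[OF fder, symmetric] by (simp add: jacobian_def matrix_def inner_axis)
  show "graph_f f = graph_mat (jacobian f x)"
  proof (intro ext)
    fix i j
    define e :: "real^'n" where "e = axis j 1"
    have e_comp: "e $ k = (if k = j then 1 else 0)" for k by (simp add: e_def axis_def)
    define \<phi> where "\<phi> u = f (x + (u - x$j) *\<^sub>R e) $ i" for u
    define K where "K = f x $ i"
    define d where "d = W i $ j"
    have pt: "x + (u - x$j) *\<^sub>R e \<in> pos_orthant" if "u > 0" for u
      using xpos that by (auto simp: pos_orthant_def axis_def e_def)
    have \<phi>x: "\<phi> (x$j) = K" by (simp add: \<phi>_def K_def)
    have Kpos: "K > 0" using maps x by (simp add: K_def pos_orthant_def)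
    have \<phi>pos: "\<phi> u > 0" if "u > 0" for u using maps pt[OF that] by (simp add: \<phi>_def pos_orthant_def)
    have \<phi>mono: "\<phi> u \<le> \<phi> v" if "0 < u" "u \<le> v" for u v
    proof -
      have "x + (u - x$j) *\<^sub>R e \<le> x + (v - x$j) *\<^sub>R e"
        using that by (simp add: less_eq_vec_def axis_def e_def)
      hence "f (x + (u - x$j) *\<^sub>R e) \<le> f (x + (v - x$j) *\<^sub>R e)"
        using opD pt that by simp
      thus ?thesis by (simp add: \<phi>_def less_eq_vec_def)
    qed
    have \<phi>der: "\<exists>D. (\<phi> has_real_derivative D) (at u)" if up: "u > 0" for u
    proof -
      obtain w where "((\<lambda>y. f y $ i) has_derivative (\<lambda>h. w \<bullet> h)) (at (x + (u - x$j) *\<^sub>R e))"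
        using compder[OF pt[OF up]] by blast
      from deriv_line[OF this[unfolded e_def]] show ?thesis
        unfolding \<phi>_def[abs_def] e_def by blast
    qed
    have \<phi>cont: "isCont \<phi> u" if "u > 0" for u
      using \<phi>der[OF that] DERIV_isCont by blast
    have \<phi>d: "(\<phi> has_real_derivative d) (at (x$j))"
      using deriv_line[of "\<lambda>y. f y $ i" "W i" x "x$j" j] W[of i]
      unfolding \<phi>_def[abs_def] e_def d_def by simp
    have \<phi>ps: "\<exists>r>0. \<exists>c::nat\<Rightarrow>real. \<forall>s. \<bar>s\<bar> < r \<longrightarrow> (\<lambda>m. c m * s^m) sums \<phi> (u+s)" if up: "u > 0" for u
    proof -
      obtain r c where r: "r > 0"
        and hs0: "\<forall>y\<in>ball (x + (u - x$j) *\<^sub>R e) r. ((\<lambda>\<alpha>. c \<alpha> * (\<Prod>k\<in>UNIV. (y$k - (x + (u - x$j) *\<^sub>R e)$k) ^ \<alpha> k)) has_sum f y $ i) UNIV"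
        using anD[OF pt[OF up], of i] by blast
      define z where "z = x + (u - x$j) *\<^sub>R e"
      note hs = hs0[folded z_def]
      have "\<forall>s. \<bar>s\<bar> < r \<longrightarrow> (\<lambda>m. c (emb j m) * s^m) sums \<phi> (u+s)"
      proof (intro allI impI)
        fix s :: real assume sr: "\<bar>s\<bar> < r"
        have ls: "(\<lambda>m. c (emb j m) * s^m) sums f (z + s *\<^sub>R axis j 1) $ i"
          by (rule line_series[OF hs sr])
        have us: "u + s - x$j = (u - x$j) + s" by simp
        have "z + s *\<^sub>R e = x + (u + s - x$j) *\<^sub>R e"
          unfolding z_def us scaleR_add_left add.assoc ..
        hence "f (z + s *\<^sub>R axis j 1) $ i = \<phi> (u + s)"
          unfolding \<phi>_def e_def by simp
        with ls show "(\<lambda>m. c (emb j m) * s^m) sums \<phi> (u+s)" by simp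
      qed
      hence "\<exists>c'::nat\<Rightarrow>real. \<forall>s. \<bar>s\<bar> < r \<longrightarrow> (\<lambda>m. c' m * s^m) sums \<phi> (u+s)"
        by (intro exI[of _ "\<lambda>m. c (emb j m)"])
      with r show ?thesis by blast
    qed
    define y :: "real^'n" where "y = (\<chi> k. ln (x$k))"
    define \<psi> where "\<psi> s = ln (\<phi> (x$j * exp s))" for s
    have vexp_line: "vexp (y + s *\<^sub>R e) = x + (x$j * exp s - x$j) *\<^sub>R e" for s
    proof -
      have "vexp (y + s *\<^sub>R e) $ k = (x + (x$j * exp s - x$j) *\<^sub>R e) $ k" for k
        using xpos[of k] xpos[of j] by (cases "k = j") (auto simp: vexp_def y_def e_def axis_def exp_add)
      thus ?thesis by (simp add: vec_eq_iff)
    qed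
    have \<psi>conv: "convex_on UNIV \<psi>"
    proof -
      have "convex_on UNIV (\<lambda>s. ln (f (vexp (y + s *\<^sub>R e)) $ i))"
        using mc unfolding mult_convex_def by (intro convex_line) blast
      moreover have "(\<lambda>s. ln (f (vexp (y + s *\<^sub>R e)) $ i)) = \<psi>"
        by (auto simp: fun_eq_iff vexp_line \<psi>_def \<phi>_def)
      ultimately show ?thesis by simp
    qed
    define q where "q = inverse K * (d * x$j)"
    have \<psi>der: "(\<psi> has_real_derivative q) (at 0)"
    proof -
      have g: "((\<lambda>s. x$j * exp s) has_real_derivative x$j) (at 0)"
        by (auto intro!: derivative_eq_intros)
      have d2: "(\<phi> has_real_derivative d) (at (x$j * exp 0))" using \<phi>d by simp
      have h1: "((\<lambda>s. \<phi> (x$j * exp s)) has_real_derivative d * x$j) (at 0)"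
        by (rule DERIV_chain2[OF d2 g])
      have l: "(ln has_real_derivative inverse K) (at (\<phi> (x$j * exp 0)))"
        using DERIV_ln[OF Kpos] \<phi>x by simp
      show ?thesis using DERIV_chain2[OF l h1] unfolding \<psi>_def[abs_def] q_def by simp
    qed
    have tangent: "q * s \<le> \<psi> s - \<psi> 0" for s
      using convex_on_imp_above_tangent[OF \<psi>conv connected_UNIV, of 0 s q] \<psi>der by simp
    have \<psi>0: "\<psi> 0 = ln K" by (simp add: \<psi>_def \<phi>x)
    define G where "G t = f (vexp (t *\<^sub>R e)) $ i" for t
    have vexp_e: "vexp (t *\<^sub>R e) = (\<chi> k. if k = j then exp t else 1)" for t
      by (simp add: vec_eq_iff vexp_def e_def axis_def)
    have vexp_pos: "vexp (t *\<^sub>R e) \<in> pos_orthant" for t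
      by (simp add: vexp_e pos_orthant_def)
    have gf: "graph_f f i j \<longleftrightarrow> filterlim G at_top at_top"
      by (simp add: graph_f_def G_def[abs_def] e_def)
    have gm: "graph_mat (jacobian f x) i j \<longleftrightarrow> d \<noteq> 0"
      by (simp add: graph_mat_def jac d_def)
    show "graph_f f i j = graph_mat (jacobian f x) i j"
    proof (cases "d = 0")
      case True
      hence q0: "q = 0" by (simp add: q_def)
      have cst: "\<phi> u = K" if "0 < u" "u \<le> x$j" for u
      proof -
        define s where "s = ln (u / x$j)"
        have us: "x$j * exp s = u" using that xpos[of j] by (simp add: s_def)
        have "ln K \<le> ln (\<phi> u)" using tangent[of s] q0 \<psi>0 by (simp add: \<psi>_def us)
        hence "K \<le> \<phi> u" using Kpos \<phi>pos[OF that(1)] by simp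
        moreover have "\<phi> u \<le> K" using \<phi>mono[OF that] \<phi>x by simp
        ultimately show ?thesis by simp
      qed
      have all: "\<forall>u>0. \<phi> u = K"
        by (rule analytic_const_extend[OF xpos[of j] \<phi>ps \<phi>cont \<phi>mono cst])
      define m where "m = Min (range (\<lambda>k. x$k))"
      have mle: "m \<le> x$k" for k unfolding m_def by (intro Min_le) auto
      have mpos: "m > 0" unfolding m_def using xpos by (subst Min_gr_iff) auto
      have bound: "G t \<le> K / m" for t
      proof -
        define z where "z = x + (x$j * exp t - x$j) *\<^sub>R e"
        have zpos: "z \<in> pos_orthant" unfolding z_def using pt[of "x$j * exp t"] xpos[of j] by simp
        have "vexp (t *\<^sub>R e) \<le> (1/m) *\<^sub>R z"
        proof -
          have "vexp (t *\<^sub>R e) $ k \<le> ((1/m) *\<^sub>R z) $ k" for k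
          proof (cases "k = j")
            case True
            have "exp t \<le> (1/m) * (x$j * exp t)"
              using mle[of j] mpos by (simp add: field_simps)
            thus ?thesis using True by (simp add: vexp_e z_def e_comp)
          next
            case False
            have "1 \<le> (1/m) * x$k" using mle[of k] mpos by (simp add: field_simps)
            thus ?thesis using False by (simp add: vexp_e z_def e_comp)
          qed
          thus ?thesis by (simp add: less_eq_vec_def)
        qed
        moreover have "(1/m) *\<^sub>R z \<in> pos_orthant" using zpos mpos by (simp add: pos_orthant_def)
        ultimately have "f (vexp (t *\<^sub>R e)) \<le> f ((1/m) *\<^sub>R z)" using opD vexp_pos by blast
        also have "\<dots> = (1/m) *\<^sub>R f z" using homD zpos mpos by simp
        finally have "G t \<le> (1/m) * f z $ i" by (simp add: G_def less_eq_vec_def)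
        also have "f z $ i = K" using all xpos[of j] by (simp add: z_def \<phi>_def[symmetric])
        finally show ?thesis by simp
      qed
      have "\<not> filterlim G at_top at_top"
      proof
        assume "filterlim G at_top at_top"
        hence "eventually (\<lambda>t. K / m + 1 \<le> G t) at_top" by (simp add: filterlim_at_top)
        hence "eventually (\<lambda>t::real. False) at_top" by eventually_elim (use bound in \<open>smt (verit)\<close>)
        thus False by simp
      qed
      thus ?thesis using gf gm True by simp
    next
      case False
      have "\<psi> (-1) \<le> \<psi> 0"
      proof -
        have "\<phi> (x$j * exp (-1)) \<le> \<phi> (x$j * exp 0)"
          using xpos[of j] by (intro \<phi>mono) auto
        thus ?thesis using \<phi>pos xpos[of j] by (simp add: \<psi>_def)
      qed
      with tangent[of "-1"] have "q \<ge> 0" by simp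
      moreover have "q \<noteq> 0" using False Kpos xpos[of j] by (simp add: q_def)
      ultimately have qpos: "q > 0" by simp
      define M where "M = (\<Sum>k\<in>UNIV. x$k)"
      have Mge: "x$k \<le> M" for k unfolding M_def
        by (rule member_le_sum) (auto intro: less_imp_le xpos)
      have Mpos: "M > 0" using Mge[of j] xpos[of j] by simp
      have lower: "K / M * (q * t) \<le> G t" for t
      proof -
        define z where "z = x + (x$j * exp t - x$j) *\<^sub>R e"
        have zpos: "z \<in> pos_orthant" unfolding z_def using pt[of "x$j * exp t"] xpos[of j] by simp
        have "ln K + q * t \<le> \<psi> t" using tangent[of t] \<psi>0 by simp
        hence "exp (ln K + q * t) \<le> exp (\<psi> t)" by simp
        hence "K * exp (q * t) \<le> \<phi> (x$j * exp t)"
          using Kpos \<phi>pos[of "x$j * exp t"] xpos[of j] by (simp add: \<psi>_def exp_add)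
        hence k1: "K * exp (q * t) \<le> f z $ i" by (simp add: \<phi>_def z_def)
        have "z \<le> M *\<^sub>R vexp (t *\<^sub>R e)"
        proof -
          have "z $ k \<le> (M *\<^sub>R vexp (t *\<^sub>R e)) $ k" for k
          proof (cases "k = j")
            case True
            thus ?thesis using Mge[of j] by (simp add: vexp_e z_def e_comp)
          next
            case False
            thus ?thesis using Mge[of k] by (simp add: vexp_e z_def e_comp)
          qed
          thus ?thesis by (simp add: less_eq_vec_def)
        qed
        moreover have "M *\<^sub>R vexp (t *\<^sub>R e) \<in> pos_orthant" using vexp_pos[of t] Mpos
          by (simp add: pos_orthant_def)
        ultimately have "f z \<le> f (M *\<^sub>R vexp (t *\<^sub>R e))" using opD zpos by blast
        also have "\<dots> = M *\<^sub>R f (vexp (t *\<^sub>R e))" using homD vexp_pos Mpos by simp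
        finally have "f z $ i \<le> M * G t" by (simp add: G_def less_eq_vec_def)
        with k1 have "K * exp (q * t) \<le> M * G t" by simp
        moreover have "q * t \<le> exp (q * t)" using exp_ge_add_one_self[of "q * t"] by linarith
        ultimately have "K * (q * t) \<le> M * G t" using Kpos
          by (smt (verit) mult_left_mono)
        thus ?thesis using Mpos by (simp add: field_simps)
      qed
      have "filterlim (\<lambda>t. (K / M * q) * t) at_top at_top"
        by (rule filterlim_tendsto_pos_mult_at_top[OF tendsto_const _ filterlim_ident])
           (use Kpos Mpos qpos in simp)
      hence "filterlim G at_top at_top"
        by (rule filterlim_at_top_mono) (use lower in \<open>simp add: mult.assoc\<close>)
      thus ?thesis using gf gm False by simp
    qed
  qed
qed

end
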